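(* Let $(A,I)$ be a prism and $m,n\ge0$. The map $\delta_\bullet\colon A\to W(A)$, followed by truncation and reduction $W(A)\to W_m(A)\to W_m(A/\phi^m(I_n)A)$, factors through $A/I_{m+n}$, giving a map $\delta_\bullet\colon A/I_{m+n}\to W_m(A/\phi^m(I_n)A)$.
   Context: A $\delta$-ring $A$ has Frobenius lift $\phi(x)=x^p+p\delta(x)$. The map $\delta_\bullet\colon A\to W(A)$ encoding the $\delta$-structure is the ring map with Witt coordinates $(x,\delta(x),\delta_2(x),\dots)$ and ghost coordinates $(x,\phi(x),\phi^2(x),\dots)$, i.e.\ $\phi^n(x)=\sum_{k=0}^np^k\delta_k(x)^{p^{n-k}}$. A prism $(A,I)$: $\delta$-ring, $I$ defining a Cartier divisor, $A$ derived $(p,I)$-complete, $p\in I+\phi(I)A$. $I_n=I\phi(I)\cdots\phi^n(I)A$. $W_m$ denotes $p$-typical Witt vectors with $m+1$ coordinates. *)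

theory Defs
  imports Main "HOL-Library.Poly_Mapping" "HOL-Computational_Algebra.Primes"
begin

definition is_ideal :: "'a::comm_ring_1 set \<Rightarrow> bool" where
  "is_ideal J \<longleftrightarrow> 0 \<in> J \<and> (\<forall>x\<in>J. \<forall>y\<in>J. x + y \<in> J) \<and> (\<forall>a. \<forall>x\<in>J. a * x \<in> J)"

definition ideal_gen :: "'a::comm_ring_1 set \<Rightarrow> 'a set" where
  "ideal_gen S = \<Inter>{J. is_ideal J \<and> S \<subseteq> J}"

definition ideal_prod :: "'a::comm_ring_1 set \<Rightarrow> 'a set \<Rightarrow> 'a set" where
  "ideal_prod I J = ideal_gen {x * y | x y. x \<in> I \<and> y \<in> J}"

text \<open>Residue class of a modulo J, i.e. the element a + J of A/J.\<close>
definition coset :: "'a::comm_ring_1 set \<Rightarrow> 'a \<Rightarrow> 'a set" where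
  "coset J a = {a + j | j. j \<in> J}"

definition delta_ring :: "nat \<Rightarrow> ('a::comm_ring_1 \<Rightarrow> 'a) \<Rightarrow> bool" where
  "delta_ring p \<delta> \<longleftrightarrow> prime p \<and> \<delta> 0 = 0 \<and> \<delta> 1 = 0 \<and>
     (\<forall>x y. \<delta> (x * y) = x ^ p * \<delta> y + y ^ p * \<delta> x + of_nat p * \<delta> x * \<delta> y) \<and>
     (\<forall>x y. \<delta> (x + y) = \<delta> x + \<delta> y
              - (\<Sum>i\<in>{1..<p}. of_nat ((p choose i) div p) * x ^ i * y ^ (p - i)))"

definition frob :: "nat \<Rightarrow> ('a::comm_ring_1 \<Rightarrow> 'a) \<Rightarrow> 'a \<Rightarrow> 'a" where
  "frob p \<delta> x = x ^ p + of_nat p * \<delta> x"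

text \<open>Integer polynomials in countably many variables x_0, x_1, ...; this is
  the free delta-ring on one generator x = x_0 with delta(x_i) = x_(i+1).\<close>
type_synonym zpoly = "(nat \<Rightarrow>\<^sub>0 nat) \<Rightarrow>\<^sub>0 int"

definition Xv :: "nat \<Rightarrow> zpoly" where
  "Xv i = Poly_Mapping.single (Poly_Mapping.single i 1) 1"

definition mpoly_eval :: "(nat \<Rightarrow> 'a::comm_ring_1) \<Rightarrow> zpoly \<Rightarrow> 'a" where
  "mpoly_eval v P = (\<Sum>mon\<in>Poly_Mapping.keys P.
      of_int (Poly_Mapping.lookup P mon) * (\<Prod>i\<in>Poly_Mapping.keys mon. v i ^ Poly_Mapping.lookup mon i))"

definition Phi :: "nat \<Rightarrow> zpoly \<Rightarrow> zpoly" where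
  "Phi p P = mpoly_eval (\<lambda>i. Xv i ^ p + of_nat p * Xv (Suc i)) P"

text \<open>deltaPolys p n = [delta_0, ..., delta_n], determined (in the torsion-free
  ring zpoly) by phi^n(x) = sum_(k<=n) p^k delta_k(x)^(p^(n-k)).\<close>
primrec deltaPolys :: "nat \<Rightarrow> nat \<Rightarrow> zpoly list" where
  "deltaPolys p 0 = [Xv 0]"
| "deltaPolys p (Suc n) = deltaPolys p n @
     [THE Q. of_nat (p ^ Suc n) * Q =
        (Phi p ^^ Suc n) (Xv 0) - (\<Sum>k\<le>n. of_nat (p ^ k) * (deltaPolys p n ! k) ^ (p ^ (Suc n - k)))]"

definition deltaPoly :: "nat \<Rightarrow> nat \<Rightarrow> zpoly" where
  "deltaPoly p k = deltaPolys p k ! k"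

definition delta_k :: "nat \<Rightarrow> ('a::comm_ring_1 \<Rightarrow> 'a) \<Rightarrow> nat \<Rightarrow> 'a \<Rightarrow> 'a" where
  "delta_k p \<delta> k x = mpoly_eval (\<lambda>i. (\<delta> ^^ i) x) (deltaPoly p k)"

text \<open>Derived f-completeness of A as a module over itself:
  Hom(A_f, A) = lim(... -f-> A -f-> A) = 0 and Ext^1(A_f, A) = lim^1 = 0.\<close>
definition derived_complete_elem :: "'a::comm_ring_1 \<Rightarrow> bool" where
  "derived_complete_elem f \<longleftrightarrow>
     (\<forall>y::nat \<Rightarrow> 'a. (\<forall>n. y n = f * y (Suc n)) \<longrightarrow> (\<forall>n. y n = 0)) \<and>
     (\<forall>x::nat \<Rightarrow> 'a. \<exists>y. \<forall>n. x n = y n - f * y (Suc n))"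

definition derived_complete :: "'a::comm_ring_1 set \<Rightarrow> bool" where
  "derived_complete J \<longleftrightarrow> (\<forall>f\<in>J. derived_complete_elem f)"

text \<open>I defines an (effective) Cartier divisor: locally on Spec A it is
  generated by a non-zero-divisor.\<close>
definition cartier_ideal :: "'a::comm_ring_1 set \<Rightarrow> bool" where
  "cartier_ideal I \<longleftrightarrow> is_ideal I \<and>
     (\<exists>F. finite F \<and> ideal_gen F = UNIV \<and>
        (\<forall>f\<in>F. \<exists>g\<in>I. (\<forall>x\<in>I. \<exists>n a. f ^ n * x = g * a) \<and>
                        (\<forall>a. g * a = 0 \<longrightarrow> (\<exists>n. f ^ n * a = 0))))"

definition prism :: "nat \<Rightarrow> ('a::comm_ring_1 \<Rightarrow> 'a) \<Rightarrow> 'a set \<Rightarrow> bool" where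
  "prism p \<delta> I \<longleftrightarrow> delta_ring p \<delta> \<and> cartier_ideal I \<and>
     derived_complete (ideal_gen (insert (of_nat p) I)) \<and>
     of_nat p \<in> {a + b | a b. a \<in> I \<and> b \<in> ideal_gen (frob p \<delta> ` I)}"

primrec Iseq :: "nat \<Rightarrow> ('a::comm_ring_1 \<Rightarrow> 'a) \<Rightarrow> 'a set \<Rightarrow> nat \<Rightarrow> 'a set" where
  "Iseq p \<delta> I 0 = I"
| "Iseq p \<delta> I (Suc n) = ideal_prod (Iseq p \<delta> I n) (ideal_gen ((frob p \<delta> ^^ Suc n) ` I))"

end

theory Submission
  imports Defs
begin


definition rhom :: "('a::comm_ring_1 \<Rightarrow> 'b::comm_ring_1) \<Rightarrow> bool" where
  "rhom h \<longleftrightarrow> h 1 = 1 \<and> (\<forall>x y. h (x + y) = h x + h y) \<and> (\<forall>x y. h (x * y) = h x * h y)"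

lemma rhomI: "h 1 = 1 \<Longrightarrow> (\<And>x y. h (x + y) = h x + h y) \<Longrightarrow> (\<And>x y. h (x * y) = h x * h y) \<Longrightarrow> rhom h"
  by (simp add: rhom_def)

context fixes h :: "'a::comm_ring_1 \<Rightarrow> 'b::comm_ring_1" assumes h: "rhom h"
begin
lemma rhom_one: "h 1 = 1" using h by (simp add: rhom_def)
lemma rhom_add: "h (x + y) = h x + h y" using h by (simp add: rhom_def)
lemma rhom_mult: "h (x * y) = h x * h y" using h by (simp add: rhom_def)
lemma rhom_zero: "h 0 = 0"
  using rhom_add[of 0 0] by simp
lemma rhom_uminus: "h (- x) = - h x"
  using rhom_add[of x "-x"] rhom_zero by (simp add: eq_neg_iff_add_eq_0 add.commute)
lemma rhom_diff: "h (x - y) = h x - h y"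
  using rhom_add[of x "-y"] rhom_uminus[of y] by simp
lemma rhom_sum: "h (sum f S) = sum (\<lambda>i. h (f i)) S"
  by (induction S rule: infinite_finite_induct) (simp_all add: rhom_zero rhom_add)
lemma rhom_prod: "h (prod f S) = prod (\<lambda>i. h (f i)) S"
  by (induction S rule: infinite_finite_induct) (simp_all add: rhom_one rhom_mult)
lemma rhom_power: "h (x ^ n) = h x ^ n"
  by (induction n) (simp_all add: rhom_one rhom_mult)
lemma rhom_of_nat: "h (of_nat n) = of_nat n"
  by (induction n) (simp_all add: rhom_one rhom_add rhom_zero)
lemma rhom_of_int: "h (of_int n) = of_int n"
proof (cases n rule: int_cases)
  case (nonneg k) then show ?thesis using rhom_of_nat[of k] by simp
next
  case (neg k) then show ?thesis using rhom_of_nat[of "Suc k"] rhom_uminus[of "of_nat (Suc k)"]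
    by simp
qed
end

lemma rhom_comp: "rhom f \<Longrightarrow> rhom g \<Longrightarrow> rhom (f \<circ> g)"
  by (simp add: rhom_def)
lemma rhom_id: "rhom id" by (simp add: rhom_def)
lemma rhom_funpow: "rhom (f::'a::comm_ring_1\<Rightarrow>'a) \<Longrightarrow> rhom (f ^^ n)"
proof (induction n)
  case 0 then show ?case by (simp add: rhom_def)
next
  case (Suc n) then show ?case using rhom_comp[of f "f ^^ n"] by (simp add: comp_def)
qed

definition mv :: "(nat \<Rightarrow> 'a::comm_ring_1) \<Rightarrow> (nat \<Rightarrow>\<^sub>0 nat) \<Rightarrow> 'a" where
  "mv v mon = (\<Prod>i\<in>Poly_Mapping.keys mon. v i ^ Poly_Mapping.lookup mon i)"

lemma mv_superset: "finite S \<Longrightarrow> Poly_Mapping.keys mon \<subseteq> S \<Longrightarrow>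
   mv v mon = (\<Prod>i\<in>S. v i ^ Poly_Mapping.lookup mon i)"
  unfolding mv_def
  by (rule prod.mono_neutral_left) (auto simp: in_keys_iff)

lemma mv_add: "mv v (a + b) = mv v a * mv v b"
proof -
  let ?S = "Poly_Mapping.keys a \<union> Poly_Mapping.keys b"
  have f: "finite ?S" by simp
  have "mv v (a + b) = (\<Prod>i\<in>?S. v i ^ Poly_Mapping.lookup (a + b) i)"
    by (rule mv_superset[OF f]) (meson keys_add)
  also have "\<dots> = (\<Prod>i\<in>?S. v i ^ Poly_Mapping.lookup a i) * (\<Prod>i\<in>?S. v i ^ Poly_Mapping.lookup b i)"
    by (simp add: lookup_add power_add prod.distrib)
  also have "\<dots> = mv v a * mv v b"
    using mv_superset[OF f, of a v] mv_superset[OF f, of b v] by simp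
  finally show ?thesis .
qed

lemma mv_zero: "mv v 0 = 1" by (simp add: mv_def)

lemma mv_single: "mv v (Poly_Mapping.single i e) = v i ^ e"
  by (cases "e = 0") (simp_all add: mv_def)

lemma mpoly_eval_superset: "finite S \<Longrightarrow> Poly_Mapping.keys P \<subseteq> S \<Longrightarrow>
   mpoly_eval v P = (\<Sum>mon\<in>S. of_int (Poly_Mapping.lookup P mon) * mv v mon)"
  unfolding mpoly_eval_def mv_def[symmetric]
  by (rule sum.mono_neutral_left) (auto simp: in_keys_iff)

lemma mpoly_eval_add: "mpoly_eval v (P + Q) = mpoly_eval v P + mpoly_eval v Q"
proof -
  let ?S = "Poly_Mapping.keys P \<union> Poly_Mapping.keys Q"
  have f: "finite ?S" by simp
  have "mpoly_eval v (P + Q) = (\<Sum>mon\<in>?S. of_int (Poly_Mapping.lookup (P + Q) mon) * mv v mon)"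
    by (rule mpoly_eval_superset[OF f]) (meson keys_add)
  also have "\<dots> = (\<Sum>mon\<in>?S. of_int (Poly_Mapping.lookup P mon) * mv v mon) +
      (\<Sum>mon\<in>?S. of_int (Poly_Mapping.lookup Q mon) * mv v mon)"
    by (simp add: lookup_add distrib_right sum.distrib)
  also have "\<dots> = mpoly_eval v P + mpoly_eval v Q"
    using mpoly_eval_superset[OF f, of P v] mpoly_eval_superset[OF f, of Q v] by simp
  finally show ?thesis .
qed

lemma mpoly_eval_zero: "mpoly_eval v 0 = 0" by (simp add: mpoly_eval_def)

lemma mpoly_eval_sum: "mpoly_eval v (sum f S) = (\<Sum>i\<in>S. mpoly_eval v (f i))"
  by (induction S rule: infinite_finite_induct) (simp_all add: mpoly_eval_zero mpoly_eval_add)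

lemma mpoly_eval_single: "mpoly_eval v (Poly_Mapping.single mon c) = of_int c * mv v mon"
  by (subst mpoly_eval_superset[of "{mon}"]) auto

lemma zpoly_expand: "(P::zpoly) = (\<Sum>mon\<in>Poly_Mapping.keys P. Poly_Mapping.single mon (Poly_Mapping.lookup P mon))"
  by (rule poly_mapping_eqI) (simp add: lookup_sum lookup_single when_def in_keys_iff
      sum.delta' )

lemma mpoly_eval_mult_single: "mpoly_eval v (Poly_Mapping.single a c * Poly_Mapping.single b d) =
   mpoly_eval v (Poly_Mapping.single a c) * mpoly_eval v (Poly_Mapping.single b d)"
  by (simp add: mult_single mpoly_eval_single mv_add)

lemma mpoly_eval_mult: "mpoly_eval v (P * Q) = mpoly_eval v P * mpoly_eval v Q"
proof -
  have "mpoly_eval v (P * Q) = mpoly_eval v ((\<Sum>a\<in>Poly_Mapping.keys P. Poly_Mapping.single a (Poly_Mapping.lookup P a)) *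
      (\<Sum>b\<in>Poly_Mapping.keys Q. Poly_Mapping.single b (Poly_Mapping.lookup Q b)))"
    using zpoly_expand[of P] zpoly_expand[of Q] by simp
  also have "\<dots> = (\<Sum>a\<in>Poly_Mapping.keys P. \<Sum>b\<in>Poly_Mapping.keys Q.
       mpoly_eval v (Poly_Mapping.single a (Poly_Mapping.lookup P a)) * mpoly_eval v (Poly_Mapping.single b (Poly_Mapping.lookup Q b)))"
    by (simp add: sum_distrib_left sum_distrib_right mpoly_eval_sum mpoly_eval_mult_single)
       (rule sum.swap)
  also have "\<dots> = mpoly_eval v (\<Sum>a\<in>Poly_Mapping.keys P. Poly_Mapping.single a (Poly_Mapping.lookup P a)) *
      mpoly_eval v (\<Sum>b\<in>Poly_Mapping.keys Q. Poly_Mapping.single b (Poly_Mapping.lookup Q b))"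
    by (simp add: sum_product mpoly_eval_sum)
  also have "\<dots> = mpoly_eval v P * mpoly_eval v Q"
    using zpoly_expand[of P] zpoly_expand[of Q] by simp
  finally show ?thesis .
qed

lemma mpoly_eval_one: "mpoly_eval v 1 = 1"
proof -
  have "(1::zpoly) = Poly_Mapping.single 0 1" by simp
  then show ?thesis by (metis mpoly_eval_single mv_zero of_int_1 mult_1)
qed

lemma rhom_mpoly_eval: "rhom (mpoly_eval v)"
  by (rule rhomI) (simp_all add: mpoly_eval_one mpoly_eval_add mpoly_eval_mult)

lemma mpoly_eval_Xv: "mpoly_eval v (Xv i) = v i"
  by (simp add: Xv_def mpoly_eval_single mv_single)

lemma Xv_power: "Xv i ^ e = Poly_Mapping.single (Poly_Mapping.single i e) 1"
  by (induction e) (simp_all add: Xv_def mult_single single_add[symmetric])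

lemma mono_expand: "(mon :: nat \<Rightarrow>\<^sub>0 nat) = (\<Sum>i\<in>Poly_Mapping.keys mon. Poly_Mapping.single i (Poly_Mapping.lookup mon i))"
  by (rule poly_mapping_eqI) (simp add: lookup_sum lookup_single when_def in_keys_iff sum.delta')

lemma single_sum_prod: "finite S \<Longrightarrow> (\<Prod>i\<in>S. Poly_Mapping.single (f i) (1::int)) = Poly_Mapping.single (\<Sum>i\<in>S. f i) 1"
  by (induction S rule: finite_induct) (simp_all add: mult_single)

lemma mv_Xv: "mv Xv mon = Poly_Mapping.single mon 1"
proof -
  have "mv Xv mon = (\<Prod>i\<in>Poly_Mapping.keys mon. Poly_Mapping.single (Poly_Mapping.single i (Poly_Mapping.lookup mon i)) 1)"
    by (simp add: mv_def Xv_power)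
  also have "\<dots> = Poly_Mapping.single mon 1"
    by (subst single_sum_prod) (simp_all flip: mono_expand)
  finally show ?thesis .
qed

lemma mpoly_eval_Xv_id: "mpoly_eval Xv P = P"
proof -
  have "mpoly_eval Xv P = (\<Sum>mon\<in>Poly_Mapping.keys P. of_int (Poly_Mapping.lookup P mon) * Poly_Mapping.single mon 1)"
    by (simp add: mpoly_eval_def mv_def[symmetric] mv_Xv)
  also have "\<dots> = (\<Sum>mon\<in>Poly_Mapping.keys P. Poly_Mapping.single mon (Poly_Mapping.lookup P mon))"
    by (rule sum.cong) (simp_all flip: single_of_int add: mult_single)
  finally show ?thesis using zpoly_expand[of P] by simp
qed

lemma rhom_mpoly_eval_comm: "rhom h \<Longrightarrow> h (mpoly_eval v P) = mpoly_eval (h \<circ> v) P"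
  by (simp add: mpoly_eval_def rhom_sum rhom_mult rhom_of_int rhom_prod rhom_power)

lemma rhom_zpoly_unique: "rhom (h::zpoly \<Rightarrow> 'a::comm_ring_1) \<Longrightarrow> h P = mpoly_eval (\<lambda>i. h (Xv i)) P"
  using rhom_mpoly_eval_comm[of h Xv P] by (simp add: mpoly_eval_Xv_id comp_def)

lemma rhom_zpoly_eq: "rhom (h::zpoly \<Rightarrow> 'a::comm_ring_1) \<Longrightarrow> rhom g \<Longrightarrow> (\<And>i. h (Xv i) = g (Xv i)) \<Longrightarrow> h P = g P"
  using rhom_zpoly_unique[of h P] rhom_zpoly_unique[of g P] by simp

lemma zpoly_induct[case_names const var add mult]:
  assumes "\<And>c. Q (of_int c)" "\<And>i. Q (Xv i)" "\<And>a b. Q a \<Longrightarrow> Q b \<Longrightarrow> Q (a + b)"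
    "\<And>a b. Q a \<Longrightarrow> Q b \<Longrightarrow> Q (a * b)"
  shows "Q (P::zpoly)"
proof -
  have s: "Q (sum f S)" if "\<And>i. i \<in> S \<Longrightarrow> Q (f i)" for f and S :: "'b set"
    using that by (induction S rule: infinite_finite_induct)
      (auto intro: assms(3) simp: assms(1)[of 0, simplified])
  have pr: "Q (prod f S)" if "\<And>i. i \<in> S \<Longrightarrow> Q (f i)" for f and S :: "'b set"
    using that by (induction S rule: infinite_finite_induct)
      (auto intro: assms(4) simp: assms(1)[of 1, simplified])
  have pw: "Q (x ^ n)" if "Q x" for x n
    using that by (induction n) (auto intro: assms(4) simp: assms(1)[of 1, simplified])
  have "Q (mpoly_eval Xv P)"
    unfolding mpoly_eval_def
    by (intro s assms(4) assms(1) pr pw assms(2))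
  then show ?thesis by (simp add: mpoly_eval_Xv_id)
qed



definition Cp :: "nat \<Rightarrow> 'a::comm_ring_1 \<Rightarrow> 'a \<Rightarrow> 'a" where
  "Cp p x y = (\<Sum>i\<in>{1..<p}. of_nat ((p choose i) div p) * x ^ i * y ^ (p - i))"

lemma binom_p:
  fixes x y :: "'a::comm_ring_1"
  assumes "prime p"
  shows "(x + y) ^ p = x ^ p + y ^ p + of_nat p * Cp p x y"
proof -
  have p1: "p \<ge> 1" using assms prime_gt_0_nat by (simp add: Suc_leI)
  have "(x + y) ^ p = (\<Sum>k\<le>p. of_nat (p choose k) * x ^ k * y ^ (p - k))"
    by (simp add: binomial_ring)
  also have "{..p} = insert 0 (insert p {1..<p})" using p1 by auto
  also have "(\<Sum>k\<in>insert 0 (insert p {1..<p}). of_nat (p choose k) * x ^ k * y ^ (p - k)) =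
      y ^ p + (x ^ p + (\<Sum>k\<in>{1..<p}. of_nat (p choose k) * x ^ k * y ^ (p - k)))"
    using p1 by (subst sum.insert; auto)+
  also have "(\<Sum>k\<in>{1..<p}. of_nat (p choose k) * x ^ k * y ^ (p - k)) = of_nat p * Cp p x y"
    unfolding Cp_def sum_distrib_left
  proof (rule sum.cong)
    fix k assume k: "k \<in> {1..<p}"
    have "p dvd (p choose k)" using k assms by (intro dvd_choose_prime) auto
    then have "(p choose k) = p * ((p choose k) div p)" by simp
    then have "(of_nat (p choose k) :: 'a) = of_nat p * of_nat ((p choose k) div p)"
      by (metis of_nat_mult)
    then show "of_nat (p choose k) * x ^ k * y ^ (p - k) = of_nat p * (of_nat ((p choose k) div p) * x ^ k * y ^ (p - k))"
      by (simp add: mult.assoc)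
  qed simp
  finally show ?thesis by (simp add: algebra_simps)
qed

lemma pdvd_int_pow:
  fixes c :: int
  assumes "prime p"
  shows "(of_nat p :: 'a::comm_ring_1) dvd (of_int c ^ p - of_int c)"
proof (induction c rule: int_induct[where k=0])
  case base then show ?case using assms prime_gt_0_nat by (simp add: power_0_left)
next
  case (step1 i)
  have eq: "(of_int (i+1) :: 'a) ^ p - of_int (i + 1) = (of_int i ^ p - of_int i) + of_nat p * Cp p (of_int i) 1"
    using binom_p[OF assms, of "of_int i :: 'a" 1] by (simp add: algebra_simps)
  show ?case unfolding eq by (intro dvd_add dvd_triv_left step1)
next
  case (step2 i)
  have "(of_int i :: 'a) ^ p = (of_int (i - 1) + 1) ^ p" by simp
  also have "\<dots> = of_int (i - 1) ^ p + 1 + of_nat p * Cp p (of_int (i - 1)) 1"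
    using binom_p[OF assms, of "of_int (i - 1) :: 'a" 1] by simp
  finally have eq: "(of_int (i - 1) :: 'a) ^ p - of_int (i - 1) = (of_int i ^ p - of_int i) - of_nat p * Cp p (of_int (i - 1)) 1"
    by (simp add: algebra_simps)
  show ?case unfolding eq by (intro dvd_diff dvd_triv_left step2)
qed

locale dring =
  fixes p :: nat and \<delta> :: "'a::comm_ring_1 \<Rightarrow> 'a"
  assumes dr: "delta_ring p \<delta>"
begin

lemma prime_p: "prime p" using dr by (simp add: delta_ring_def)
lemma p_pos: "p > 0" using prime_p prime_gt_0_nat by blast
lemma d0: "\<delta> 0 = 0" using dr by (simp add: delta_ring_def)
lemma d1: "\<delta> 1 = 0" using dr by (simp add: delta_ring_def)
lemma dmult: "\<delta> (x * y) = x ^ p * \<delta> y + y ^ p * \<delta> x + of_nat p * \<delta> x * \<delta> y"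
  using dr by (simp add: delta_ring_def)
lemma dadd: "\<delta> (x + y) = \<delta> x + \<delta> y - Cp p x y"
  using dr by (simp add: delta_ring_def Cp_def)

lemma duminus: "\<delta> (- x) = Cp p x (- x) - \<delta> x"
  using dadd[of x "-x"] d0 by (simp add: algebra_simps)

abbreviation "\<phi> \<equiv> frob p \<delta>"

lemma frob_add: "\<phi> (x + y) = \<phi> x + \<phi> y"
  unfolding frob_def binom_p[OF prime_p, of x y] dadd[of x y]
  by (simp add: algebra_simps)

lemma frob_mult: "\<phi> (x * y) = \<phi> x * \<phi> y"
  unfolding frob_def dmult by (simp add: algebra_simps power_mult_distrib)

lemma frob_one: "\<phi> 1 = 1" by (simp add: frob_def d1)

lemma rhom_frob: "rhom \<phi>"
  by (simp add: rhomI frob_add frob_mult frob_one)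

end

section \<open>The delta-structure on zpoly\<close>

definition PhiS :: "nat \<Rightarrow> (nat \<Rightarrow> nat) \<Rightarrow> zpoly \<Rightarrow> zpoly" where
  "PhiS p \<sigma> P = mpoly_eval (\<lambda>i. Xv i ^ p + of_nat p * Xv (\<sigma> i)) P"

lemma Phi_PhiS: "Phi p = PhiS p Suc"
  by (simp add: fun_eq_iff Phi_def PhiS_def)

lemma rhom_PhiS: "rhom (PhiS p \<sigma>)"
  unfolding PhiS_def[abs_def] by (rule rhom_mpoly_eval)

lemma PhiS_Xv: "PhiS p \<sigma> (Xv i) = Xv i ^ p + of_nat p * Xv (\<sigma> i)"
  by (simp add: PhiS_def mpoly_eval_Xv)

lemma zpoly_cancel: "of_nat p * (Q::zpoly) = of_nat p * Q' \<Longrightarrow> p > 0 \<Longrightarrow> Q = Q'"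
  by simp

lemma zpoly_cancel_pow: "of_nat (p ^ k) * (Q::zpoly) = of_nat (p ^ k) * Q' \<Longrightarrow> p > 0 \<Longrightarrow> Q = Q'"
  by simp

lemma PhiS_cong:
  assumes "prime p"
  shows "(of_nat p :: zpoly) dvd (PhiS p \<sigma> P - P ^ p)"
proof (induction P rule: zpoly_induct)
  case (const c)
  have "PhiS p \<sigma> (of_int c) = of_int c" by (simp add: rhom_of_int[OF rhom_PhiS])
  moreover have "(of_int c::zpoly) - of_int c ^ p = - (of_int c ^ p - of_int c)" by simp
  ultimately show ?case using pdvd_int_pow[OF assms, of c, where 'a=zpoly] by (simp only: dvd_minus_iff)
next
  case (var i) then show ?case by (simp add: PhiS_Xv)
next
  case (add a b)
  then obtain u w where u: "PhiS p \<sigma> a = a ^ p + of_nat p * u" and w: "PhiS p \<sigma> b = b ^ p + of_nat p * w"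
    by (metis dvd_def diff_eq_eq add.commute)
  have "PhiS p \<sigma> (a + b) - (a + b) ^ p = of_nat p * (u + w - Cp p a b)"
    by (simp add: rhom_add[OF rhom_PhiS] u w binom_p[OF assms] algebra_simps)
  then show ?case by simp
next
  case (mult a b)
  then obtain u w where u: "PhiS p \<sigma> a = a ^ p + of_nat p * u" and w: "PhiS p \<sigma> b = b ^ p + of_nat p * w"
    by (metis dvd_def diff_eq_eq add.commute)
  have "PhiS p \<sigma> (a * b) - (a * b) ^ p = of_nat p * (a ^ p * w + b ^ p * u + of_nat p * u * w)"
    by (simp add: rhom_mult[OF rhom_PhiS] u w algebra_simps power_mult_distrib)
  then show ?case by simp
qed

definition Dz :: "nat \<Rightarrow> (nat \<Rightarrow> nat) \<Rightarrow> zpoly \<Rightarrow> zpoly" where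
  "Dz p \<sigma> P = (THE Q. of_nat p * Q = PhiS p \<sigma> P - P ^ p)"

lemma Dz_eq:
  assumes "prime p"
  shows "of_nat p * Dz p \<sigma> P = PhiS p \<sigma> P - P ^ p"
proof -
  obtain Q where Q: "PhiS p \<sigma> P - P ^ p = of_nat p * Q" using PhiS_cong[OF assms] by (auto simp: dvd_def)
  have pp: "p > 0" using assms prime_gt_0_nat by blast
  have "of_nat p * (THE Q. of_nat p * Q = PhiS p \<sigma> P - P ^ p) = PhiS p \<sigma> P - P ^ p"
    by (rule theI[of _ Q]) (use Q pp in auto)
  then show ?thesis by (simp add: Dz_def)
qed

lemma Dz_char:
  assumes "prime p" "of_nat p * Q = PhiS p \<sigma> P - P ^ p"
  shows "Dz p \<sigma> P = Q"
proof -
  have "of_nat p * Dz p \<sigma> P = of_nat p * Q" using Dz_eq[OF assms(1), of \<sigma> P] assms(2) by simp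
  then show ?thesis using zpoly_cancel prime_gt_0_nat[OF assms(1)] by blast
qed

lemma frob_Dz: "prime p \<Longrightarrow> frob p (Dz p \<sigma>) = PhiS p \<sigma>"
  by (simp add: fun_eq_iff frob_def Dz_eq)

lemma delta_ring_Dz:
  assumes "prime p"
  shows "delta_ring p (Dz p \<sigma>)"
proof -
  have pp: "p > 0" using assms prime_gt_0_nat by blast
  note E = Dz_eq[OF assms, of \<sigma>]
  have "Dz p \<sigma> 0 = 0" by (rule Dz_char[OF assms]) (simp add: rhom_zero[OF rhom_PhiS] pp)
  moreover have "Dz p \<sigma> 1 = 0" by (rule Dz_char[OF assms]) (simp add: rhom_one[OF rhom_PhiS])
  moreover have "Dz p \<sigma> (x * y) = x ^ p * Dz p \<sigma> y + y ^ p * Dz p \<sigma> x + of_nat p * Dz p \<sigma> x * Dz p \<sigma> y" for x y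
  proof (rule Dz_char[OF assms])
    have a: "PhiS p \<sigma> x = x ^ p + of_nat p * Dz p \<sigma> x" "PhiS p \<sigma> y = y ^ p + of_nat p * Dz p \<sigma> y"
      using E[of x] E[of y] by (simp_all add: algebra_simps)
    show "of_nat p * (x ^ p * Dz p \<sigma> y + y ^ p * Dz p \<sigma> x + of_nat p * Dz p \<sigma> x * Dz p \<sigma> y) =
      PhiS p \<sigma> (x * y) - (x * y) ^ p"
      by (simp add: rhom_mult[OF rhom_PhiS] a algebra_simps power_mult_distrib)
  qed
  moreover have "Dz p \<sigma> (x + y) = Dz p \<sigma> x + Dz p \<sigma> y - Cp p x y" for x y
  proof (rule Dz_char[OF assms])
    have a: "PhiS p \<sigma> x = x ^ p + of_nat p * Dz p \<sigma> x" "PhiS p \<sigma> y = y ^ p + of_nat p * Dz p \<sigma> y"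
      using E[of x] E[of y] by (simp_all add: algebra_simps)
    show "of_nat p * (Dz p \<sigma> x + Dz p \<sigma> y - Cp p x y) = PhiS p \<sigma> (x + y) - (x + y) ^ p"
      by (simp add: rhom_add[OF rhom_PhiS] a binom_p[OF assms] algebra_simps)
  qed
  ultimately show ?thesis using assms by (simp add: delta_ring_def Cp_def)
qed

lemma Dz_Xv: "prime p \<Longrightarrow> Dz p \<sigma> (Xv i) = Xv (\<sigma> i)"
  by (rule Dz_char) (simp_all add: PhiS_Xv)



lemma diff_dvd_pow_diff: "(x - y) dvd (x ^ n - y ^ n :: 'a::comm_ring_1)"
  by (metis power_diff_sumr2 dvd_triv_left)

lemma pow_p_cong:
  fixes a b :: "'a::comm_ring_1"
  assumes j: "j \<ge> 1" and d: "of_nat (p ^ j) dvd (a - b)"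
  shows "of_nat (p ^ Suc j) dvd (a ^ p - b ^ p)"
proof -
  have "p ^ j = p * p ^ (j - 1)" using j by (metis Suc_diff_le diff_Suc_1 power_Suc)
  then have "(of_nat (p ^ j) :: 'a) = of_nat p * of_nat (p ^ (j - 1))" by (metis of_nat_mult)
  then have pd: "of_nat p dvd (a - b)"
    using d by (metis dvd_trans dvd_triv_left)
  have e: "a ^ p - b ^ p = (a - b) * (\<Sum>i<p. b ^ (p - Suc i) * a ^ i)"
    by (rule power_diff_sumr2)
  have "(\<Sum>i<p. b ^ (p - Suc i) * a ^ i) - of_nat p * b ^ (p - 1) = (\<Sum>i<p. b ^ (p - Suc i) * (a ^ i - b ^ i))"
  proof -
    have "(\<Sum>i<p. b ^ (p - Suc i) * b ^ i) = (\<Sum>i<p. b ^ (p - 1))"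
      by (rule sum.cong) (auto simp flip: power_add)
    then show ?thesis by (simp add: sum_subtractf right_diff_distrib)
  qed
  moreover have "of_nat p dvd (\<Sum>i<p. b ^ (p - Suc i) * (a ^ i - b ^ i))"
    by (intro dvd_sum dvd_mult dvd_trans[OF pd diff_dvd_pow_diff])
  ultimately have "of_nat p dvd ((\<Sum>i<p. b ^ (p - Suc i) * a ^ i) - of_nat p * b ^ (p - 1) + of_nat p * b ^ (p - 1))"
    by (intro dvd_add dvd_triv_left) simp_all
  then have "of_nat p dvd (\<Sum>i<p. b ^ (p - Suc i) * a ^ i)" by simp
  then obtain t where t: "(\<Sum>i<p. b ^ (p - Suc i) * a ^ i) = of_nat p * t" by (auto simp: dvd_def)
  obtain c where c: "a - b = of_nat (p ^ j) * c" using d by (auto simp: dvd_def)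
  have "a ^ p - b ^ p = of_nat (p ^ Suc j) * (c * t)" unfolding e t c by (simp add: algebra_simps)
  then show ?thesis by simp
qed

lemma pow_pe_cong:
  fixes a b :: "'a::comm_ring_1"
  assumes d: "of_nat p dvd (a - b)"
  shows "of_nat (p ^ Suc e) dvd (a ^ (p ^ e) - b ^ (p ^ e))"
proof (induction e)
  case 0 then show ?case using d by simp
next
  case (Suc e)
  have "of_nat (p ^ Suc (Suc e)) dvd ((a ^ (p ^ e)) ^ p - (b ^ (p ^ e)) ^ p)"
    by (rule pow_p_cong[OF _ Suc]) simp
  then show ?case by (simp add: power_mult[symmetric] mult.commute)
qed

section \<open>The universal delta polynomials\<close>

lemma length_deltaPolys: "length (deltaPolys p n) = Suc n"
  by (induction n) simp_all

lemma deltaPolys_nth: "k \<le> n \<Longrightarrow> deltaPolys p n ! k = deltaPoly p k"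
proof (induction n)
  case 0 then show ?case by (simp add: deltaPoly_def)
next
  case (Suc n)
  show ?case
  proof (cases "k = Suc n")
    case True then show ?thesis by (simp add: deltaPoly_def)
  next
    case False
    then have "k \<le> n" using Suc by simp
    then show ?thesis using Suc by (simp add: nth_append length_deltaPolys)
  qed
qed

lemma ghost_zpoly:
  assumes pr: "prime p"
  shows "(Phi p ^^ n) (Xv 0) = (\<Sum>k\<le>n. of_nat (p ^ k) * deltaPoly p k ^ (p ^ (n - k)))"
proof (induction n)
  case 0 then show ?case by (simp add: deltaPoly_def)
next
  case (Suc n)
  have pp: "p > 0" using pr prime_gt_0_nat by blast
  let ?R = "(Phi p ^^ Suc n) (Xv 0) - (\<Sum>k\<le>n. of_nat (p ^ k) * (deltaPolys p n ! k) ^ (p ^ (Suc n - k)))"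
  have R: "?R = (Phi p ^^ Suc n) (Xv 0) - (\<Sum>k\<le>n. of_nat (p ^ k) * deltaPoly p k ^ (p ^ (Suc n - k)))"
    by (simp add: deltaPolys_nth)
  have "(Phi p ^^ Suc n) (Xv 0) = Phi p ((Phi p ^^ n) (Xv 0))" by simp
  also have "\<dots> = Phi p (\<Sum>k\<le>n. of_nat (p ^ k) * deltaPoly p k ^ (p ^ (n - k)))"
    by (simp only: Suc)
  also have "\<dots> = (\<Sum>k\<le>n. of_nat (p ^ k) * Phi p (deltaPoly p k) ^ (p ^ (n - k)))"
    unfolding Phi_PhiS
    by (simp add: rhom_sum[OF rhom_PhiS] rhom_mult[OF rhom_PhiS] rhom_power[OF rhom_PhiS] rhom_of_nat[OF rhom_PhiS])
  finally have "?R = (\<Sum>k\<le>n. of_nat (p ^ k) * (Phi p (deltaPoly p k) ^ (p ^ (n - k)) - deltaPoly p k ^ (p ^ (Suc n - k))))"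
    unfolding R by (simp add: sum_subtractf right_diff_distrib)
  moreover have "of_nat (p ^ Suc n) dvd \<dots>"
  proof (rule dvd_sum)
    fix k assume k: "k \<in> {..n}"
    have "of_nat (p ^ Suc (n - k)) dvd (Phi p (deltaPoly p k) ^ (p ^ (n - k)) - (deltaPoly p k ^ p) ^ (p ^ (n - k)))"
      by (rule pow_pe_cong) (simp add: Phi_PhiS PhiS_cong[OF pr])
    moreover have "(deltaPoly p k ^ p) ^ (p ^ (n - k)) = deltaPoly p k ^ (p ^ (Suc n - k))"
      using k by (simp add: power_mult[symmetric] Suc_diff_le mult.commute)
    ultimately have "of_nat (p ^ k) * of_nat (p ^ Suc (n - k)) dvd
        of_nat (p ^ k) * (Phi p (deltaPoly p k) ^ (p ^ (n - k)) - deltaPoly p k ^ (p ^ (Suc n - k)))"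
      by (simp add: mult_dvd_mono)
    moreover have "of_nat (p ^ k) * of_nat (p ^ Suc (n - k)) = (of_nat (p ^ Suc n) :: zpoly)"
    proof -
      have "p ^ k * p ^ Suc (n - k) = p ^ Suc n" using k by (simp flip: power_add)
      then show ?thesis by (metis of_nat_mult)
    qed
    ultimately show "of_nat (p ^ Suc n) dvd of_nat (p ^ k) * (Phi p (deltaPoly p k) ^ (p ^ (n - k)) - deltaPoly p k ^ (p ^ (Suc n - k)))"
      by metis
  qed
  ultimately obtain Q where Q: "?R = of_nat (p ^ Suc n) * Q" by (auto simp: dvd_def)
  have "of_nat (p ^ Suc n) * deltaPoly p (Suc n) = ?R"
  proof -
    have "deltaPoly p (Suc n) = (THE Q. of_nat (p ^ Suc n) * Q = ?R)"
      by (simp add: deltaPoly_def length_deltaPolys nth_append)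
    moreover have "of_nat (p ^ Suc n) * (THE Q. of_nat (p ^ Suc n) * Q = ?R) = ?R"
      by (rule theI[of _ Q]) (use Q pp in auto)
    ultimately show ?thesis by simp
  qed
  then show ?case unfolding R by (simp add: algebra_simps)
qed

section \<open>Ghost identity in an arbitrary delta-ring\<close>

context dring begin

definition evx :: "'a \<Rightarrow> zpoly \<Rightarrow> 'a" where
  "evx x = mpoly_eval (\<lambda>i. (\<delta> ^^ i) x)"

lemma rhom_evx: "rhom (evx x)"
  unfolding evx_def by (rule rhom_mpoly_eval)

lemma evx_Phi: "evx x (Phi p P) = \<phi> (evx x P)"
proof -
  have "(evx x \<circ> PhiS p Suc) P = (\<phi> \<circ> evx x) P"
  proof (rule rhom_zpoly_eq)
    show "rhom (evx x \<circ> PhiS p Suc)" by (intro rhom_comp rhom_evx rhom_PhiS)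
    show "rhom (\<phi> \<circ> evx x)" by (intro rhom_comp rhom_evx rhom_frob)
    fix i show "(evx x \<circ> PhiS p Suc) (Xv i) = (\<phi> \<circ> evx x) (Xv i)"
      by (simp add: PhiS_Xv evx_def rhom_add[OF rhom_mpoly_eval] rhom_mult[OF rhom_mpoly_eval]
          rhom_power[OF rhom_mpoly_eval] rhom_of_nat[OF rhom_mpoly_eval] mpoly_eval_Xv frob_def)
  qed
  then show ?thesis by (simp add: Phi_PhiS)
qed

lemma evx_Phi_pow: "evx x ((Phi p ^^ n) P) = (\<phi> ^^ n) (evx x P)"
  by (induction n) (simp_all add: evx_Phi)

lemma delta_k_evx: "delta_k p \<delta> k x = evx x (deltaPoly p k)"
  by (simp add: delta_k_def evx_def)

lemma ghost:
  "(\<phi> ^^ n) x = (\<Sum>k\<le>n. of_nat (p ^ k) * delta_k p \<delta> k x ^ (p ^ (n - k)))"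
proof -
  have "(\<phi> ^^ n) x = (\<phi> ^^ n) (evx x (Xv 0))" by (simp add: evx_def mpoly_eval_Xv)
  also have "\<dots> = evx x ((Phi p ^^ n) (Xv 0))" by (simp add: evx_Phi_pow)
  also have "\<dots> = (\<Sum>k\<le>n. of_nat (p ^ k) * delta_k p \<delta> k x ^ (p ^ (n - k)))"
    by (simp add: ghost_zpoly[OF prime_p] delta_k_evx rhom_sum[OF rhom_evx] rhom_mult[OF rhom_evx]
        rhom_power[OF rhom_evx] rhom_of_nat[OF rhom_evx])
  finally show ?thesis .
qed

lemma delta0: "delta_k p \<delta> 0 x = x"
  using ghost[of 0 x] by simp

end



lemma is_ideal_ideal_gen: "is_ideal (ideal_gen S)"
  unfolding is_ideal_def ideal_gen_def by blast

lemma ideal_gen_sub: "S \<subseteq> ideal_gen S"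
  unfolding ideal_gen_def by blast

lemma ideal_gen_in: "x \<in> S \<Longrightarrow> x \<in> ideal_gen S"
  using ideal_gen_sub by blast

lemma ideal_gen_least: "is_ideal J \<Longrightarrow> S \<subseteq> J \<Longrightarrow> ideal_gen S \<subseteq> J"
  unfolding ideal_gen_def by blast

lemma ideal_gen_mono: "S \<subseteq> T \<Longrightarrow> ideal_gen S \<subseteq> ideal_gen T"
  by (meson ideal_gen_least is_ideal_ideal_gen ideal_gen_sub subset_trans)

context fixes J :: "'a::comm_ring_1 set" assumes J: "is_ideal J"
begin
lemma id_0: "0 \<in> J" using J by (simp add: is_ideal_def)
lemma id_add: "x \<in> J \<Longrightarrow> y \<in> J \<Longrightarrow> x + y \<in> J" using J by (simp add: is_ideal_def)
lemma id_multL: "x \<in> J \<Longrightarrow> a * x \<in> J" using J by (simp add: is_ideal_def)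
lemma id_multR: "x \<in> J \<Longrightarrow> x * a \<in> J" using id_multL[of x a] by (simp add: mult.commute)
lemma id_uminus: "x \<in> J \<Longrightarrow> - x \<in> J" using id_multL[of x "-1"] by simp
lemma id_diff: "x \<in> J \<Longrightarrow> y \<in> J \<Longrightarrow> x - y \<in> J" using id_add[of x "-y"] id_uminus[of y] by simp
lemma id_sum: "(\<And>i. i \<in> S \<Longrightarrow> f i \<in> J) \<Longrightarrow> sum f S \<in> J"
  by (induction S rule: infinite_finite_induct) (auto simp: id_0 id_add)
lemma id_pow: "x \<in> J \<Longrightarrow> n > 0 \<Longrightarrow> x ^ n \<in> J"
  by (cases n) (simp_all add: id_multR)
lemma id_dvd: "x \<in> J \<Longrightarrow> x dvd y \<Longrightarrow> y \<in> J"
  by (auto simp: dvd_def id_multR)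
lemma id_pow_diff: "x - y \<in> J \<Longrightarrow> x ^ n - y ^ n \<in> J"
  using id_dvd diff_dvd_pow_diff by blast
end

lemma rhom_ideal_gen_image:
  assumes h: "rhom h"
  shows "h ` ideal_gen S \<subseteq> ideal_gen (h ` S)"
proof -
  have "is_ideal {x. h x \<in> ideal_gen (h ` S)}"
    unfolding is_ideal_def
    by (auto simp: rhom_zero[OF h] rhom_add[OF h] rhom_mult[OF h] id_0 id_add id_multL is_ideal_ideal_gen)
  moreover have "S \<subseteq> {x. h x \<in> ideal_gen (h ` S)}" using ideal_gen_sub by blast
  ultimately show ?thesis using ideal_gen_least by blast
qed

lemma rhom_Cp: "rhom h \<Longrightarrow> h (Cp p x y) = Cp p (h x) (h y)"
  by (simp add: Cp_def rhom_sum rhom_mult rhom_power rhom_of_nat)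

lemma (in dring) eval_delta:
  assumes v: "\<And>i. \<delta> (v i) = v (\<sigma> i)"
  shows "\<delta> (mpoly_eval v P) = mpoly_eval v (Dz p \<sigma> P)"
proof -
  interpret Z: dring p "Dz p \<sigma>" by unfold_locales (rule delta_ring_Dz[OF prime_p])
  note h = rhom_mpoly_eval[of v]
  define Q where "Q P \<longleftrightarrow> \<delta> (mpoly_eval v P) = mpoly_eval v (Dz p \<sigma> P)" for P
  have add: "Q (a + b)" if "Q a" "Q b" for a b
    using that unfolding Q_def by (simp add: rhom_add[OF h] rhom_diff[OF h] dadd Z.dadd rhom_Cp[OF h])
  have mult: "Q (a * b)" if "Q a" "Q b" for a b
    using that unfolding Q_def
    by (simp add: rhom_add[OF h] rhom_mult[OF h] rhom_power[OF h] rhom_of_nat[OF h] dmult Z.dmult)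
  have neg: "Q (- a)" if "Q a" for a
    using that unfolding Q_def by (simp add: rhom_uminus[OF h] rhom_diff[OF h] duminus Z.duminus rhom_Cp[OF h])
  have one: "Q 1" unfolding Q_def by (simp add: rhom_one[OF h] d1 Z.d1 rhom_zero[OF h])
  have cst: "Q (of_int c)" for c
  proof (induction c rule: int_induct[where k=0])
    case base then show ?case unfolding Q_def by (simp add: rhom_zero[OF h] d0 Z.d0)
  next
    case (step1 i) then show ?case using add[OF _ one] by simp
  next
    case (step2 i) then show ?case using add[OF _ neg[OF one]] by simp
  qed
  have "Q P"
  proof (induction P rule: zpoly_induct)
    case (const c) show ?case by (rule cst)
  next
    case (var i) then show ?case unfolding Q_def by (simp add: mpoly_eval_Xv Dz_Xv[OF prime_p] v)
  qed (simp_all add: add mult)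
  then show ?thesis by (simp add: Q_def)
qed



section \<open>Substitution and torsion-freeness of quotients\<close>

lemma tf_quot:
  fixes Zs :: "nat set"
  assumes m: "of_nat c * P \<in> ideal_gen (Xv ` Zs)" and c: "c > 0"
  shows "P \<in> ideal_gen (Xv ` Zs)"
proof -
  define s where "s = mpoly_eval (\<lambda>j. if j \<in> Zs then 0 else Xv j)"
  have hs: "rhom s" unfolding s_def by (rule rhom_mpoly_eval)
  have K: "is_ideal (ideal_gen (Xv ` Zs))" by (rule is_ideal_ideal_gen)
  have "is_ideal {Q. s Q = 0}"
    unfolding is_ideal_def by (auto simp: rhom_zero[OF hs] rhom_add[OF hs] rhom_mult[OF hs])
  moreover have "Xv ` Zs \<subseteq> {Q. s Q = 0}" by (auto simp: s_def mpoly_eval_Xv)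
  ultimately have kill: "ideal_gen (Xv ` Zs) \<subseteq> {Q. s Q = 0}" by (rule ideal_gen_least)
  have diff: "Q - s Q \<in> ideal_gen (Xv ` Zs)" for Q
  proof (induction Q rule: zpoly_induct)
    case (const c) then show ?case by (simp add: rhom_of_int[OF hs] id_0[OF K])
  next
    case (var i) then show ?case
      by (cases "i \<in> Zs") (auto simp: s_def mpoly_eval_Xv id_0[OF K] intro: ideal_gen_in)
  next
    case (add a b)
    have eq: "a + b - s (a + b) = (a - s a) + (b - s b)" by (simp add: rhom_add[OF hs])
    show ?case unfolding eq by (rule id_add[OF K add(1) add(2)])
  next
    case (mult a b)
    have eq: "a * b - s (a * b) = a * (b - s b) + (a - s a) * s b" by (simp add: rhom_mult[OF hs] algebra_simps)
    show ?case unfolding eq by (intro id_add[OF K] id_multL[OF K] id_multR[OF K] mult)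
  qed
  have "s (of_nat c * P) = 0" using kill m by blast
  then have "s P = 0" using c by (simp add: rhom_mult[OF hs] rhom_of_nat[OF hs])
  then show ?thesis using diff[of P] by simp
qed

section \<open>The free delta-ring on two generators\<close>

declare of_nat_power [simp del]

definition s2 :: "nat \<Rightarrow> nat" where "s2 j = j + 2"

locale zp =
  fixes p :: nat
  assumes pr: "prime p"
begin

abbreviation "D \<equiv> Dz p s2"
abbreviation "F \<equiv> PhiS p s2"

sublocale Z: dring p D by unfold_locales (rule delta_ring_Dz[OF pr])

lemma pp: "p > 0" using pr prime_gt_0_nat by blast

lemma frobF: "frob p D = F" by (rule frob_Dz[OF pr])

lemma rhomF: "rhom F" by (rule rhom_PhiS)
lemma rhomFn: "rhom (F ^^ n)" by (rule rhom_funpow[OF rhomF])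

definition Ys :: "nat \<Rightarrow> nat set" where "Ys k = {2 * i + 1 | i. i < k}"
definition Kl :: "nat \<Rightarrow> zpoly set" where "Kl k = ideal_gen (Xv ` Ys k)"

lemma Kl_ideal: "is_ideal (Kl k)" by (simp add: Kl_def is_ideal_ideal_gen)
lemma Kl_mono: "k \<le> l \<Longrightarrow> Kl k \<subseteq> Kl l"
  unfolding Kl_def by (rule ideal_gen_mono) (auto simp: Ys_def)
lemma y_in_Kl: "i < k \<Longrightarrow> Xv (2 * i + 1) \<in> Kl k"
  unfolding Kl_def by (rule ideal_gen_in) (auto simp: Ys_def)
lemma Kl_tf: "of_nat c * P \<in> Kl k \<Longrightarrow> c > 0 \<Longrightarrow> P \<in> Kl k"
  unfolding Kl_def by (rule tf_quot)

abbreviation "dk k z \<equiv> delta_k p D k z"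

lemma ghostR: "(F ^^ n) z = (\<Sum>k\<le>n. of_nat (p ^ k) * dk k z ^ (p ^ (n - k)))"
  using Z.ghost[of n z] by (simp only: frobF)

lemma ghost_split: "of_nat (p ^ k) * dk k z = (F ^^ k) z - (\<Sum>i<k. of_nat (p ^ i) * dk i z ^ (p ^ (k - i)))"
  using ghostR[of k z] by (simp add: lessThan_Suc_atMost[symmetric])

lemma F_y: "F (Xv (2 * i + 1)) = Xv (2 * i + 1) ^ p + of_nat p * Xv (2 * Suc i + 1)"
  by (simp add: PhiS_Xv s2_def)

lemma Fy_in: "(F ^^ j) (Xv (2 * i + 1)) \<in> Kl (i + j + 1)"
proof (induction j arbitrary: i)
  case 0 then show ?case using y_in_Kl[of i "Suc i"] by simp
next
  case (Suc j)
  have "(F ^^ Suc j) (Xv (2 * i + 1)) = (F ^^ j) (Xv (2 * i + 1)) ^ p + of_nat p * (F ^^ j) (Xv (2 * Suc i + 1))"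
    by (simp only: funpow_Suc_right comp_def F_y rhom_add[OF rhomFn] rhom_mult[OF rhomFn]
        rhom_power[OF rhomFn] rhom_of_nat[OF rhomFn])
  moreover have "(F ^^ j) (Xv (2 * i + 1)) ^ p \<in> Kl (i + Suc j + 1)"
    using Kl_mono[of "i + j + 1" "i + Suc j + 1"] Suc.IH[of i] id_pow[OF Kl_ideal] pp by auto
  moreover have "(F ^^ j) (Xv (2 * Suc i + 1)) \<in> Kl (i + Suc j + 1)"
    using Suc.IH[of "Suc i"] by simp
  ultimately show ?case using id_add[OF Kl_ideal] id_multL[OF Kl_ideal] by simp
qed

lemma Fy_cong: "(F ^^ j) (Xv (2 * i + 1)) - of_nat (p ^ j) * Xv (2 * (i + j) + 1) \<in> Kl (i + j)"
proof (induction j arbitrary: i)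
  case 0 then show ?case by (simp add: id_0[OF Kl_ideal])
next
  case (Suc j)
  have "(F ^^ Suc j) (Xv (2 * i + 1)) - of_nat (p ^ Suc j) * Xv (2 * (i + Suc j) + 1) =
     (F ^^ j) (Xv (2 * i + 1)) ^ p + of_nat p * ((F ^^ j) (Xv (2 * Suc i + 1)) - of_nat (p ^ j) * Xv (2 * (Suc i + j) + 1))"
    by (simp only: funpow_Suc_right comp_def F_y rhom_add[OF rhomFn] rhom_mult[OF rhomFn]
        rhom_power[OF rhomFn] rhom_of_nat[OF rhomFn]) (simp add: algebra_simps)
  moreover have "(F ^^ j) (Xv (2 * i + 1)) ^ p \<in> Kl (i + Suc j)"
    using Fy_in[of j i] id_pow[OF Kl_ideal] pp by simp
  moreover have "(F ^^ j) (Xv (2 * Suc i + 1)) - of_nat (p ^ j) * Xv (2 * (Suc i + j) + 1) \<in> Kl (i + Suc j)"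
    using Suc.IH[of "Suc i"] by simp
  ultimately show ?case using id_add[OF Kl_ideal] id_multL[OF Kl_ideal] by simp
qed

abbreviation "yv \<equiv> Xv 1"
abbreviation "xv \<equiv> Xv 0"

lemma dy_in: "dk j yv \<in> Kl (Suc j)"
proof (induction j rule: less_induct)
  case (less j)
  have "(F ^^ j) yv \<in> Kl (Suc j)" using Fy_in[of j 0] by simp
  moreover have "(\<Sum>i<j. of_nat (p ^ i) * dk i yv ^ (p ^ (j - i))) \<in> Kl (Suc j)"
  proof (rule id_sum[OF Kl_ideal])
    fix i assume i: "i \<in> {..<j}"
    then have "dk i yv \<in> Kl (Suc j)" using less[of i] Kl_mono[of "Suc i" "Suc j"] by auto
    then show "of_nat (p ^ i) * dk i yv ^ (p ^ (j - i)) \<in> Kl (Suc j)"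
      using id_pow[OF Kl_ideal] id_multL[OF Kl_ideal] pp by simp
  qed
  ultimately have "of_nat (p ^ j) * dk j yv \<in> Kl (Suc j)"
    unfolding ghost_split using id_diff[OF Kl_ideal] by simp
  then show ?case by (rule Kl_tf) (simp_all add: pp)
qed

lemma dy_in': "i < k \<Longrightarrow> dk i yv \<in> Kl k"
  using dy_in[of i] Kl_mono[of "Suc i" k] by auto

lemma sum_in_Kl: "(\<Sum>i<k. of_nat (p ^ i) * dk i yv ^ (p ^ (k - i))) \<in> Kl k"
  by (rule id_sum[OF Kl_ideal]) (use dy_in' id_pow[OF Kl_ideal] id_multL[OF Kl_ideal] pp in auto)

lemma y_cong: "Xv (2 * k + 1) - dk k yv \<in> Kl k"
proof -
  have "of_nat (p ^ k) * (dk k yv - Xv (2 * k + 1)) =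
     ((F ^^ k) yv - of_nat (p ^ k) * Xv (2 * k + 1)) - (\<Sum>i<k. of_nat (p ^ i) * dk i yv ^ (p ^ (k - i)))"
    by (simp add: right_diff_distrib ghost_split)
  also have "\<dots> \<in> Kl k"
    using Fy_cong[of k 0] sum_in_Kl id_diff[OF Kl_ideal] by simp
  finally have "dk k yv - Xv (2 * k + 1) \<in> Kl k" by (rule Kl_tf) (simp_all add: pp)
  then show ?thesis using id_uminus[OF Kl_ideal] by fastforce
qed

definition Lg :: "nat \<Rightarrow> zpoly set" where "Lg k = ideal_gen {dk i yv | i. i < k}"

lemma Lg_ideal: "is_ideal (Lg k)" by (simp add: Lg_def is_ideal_ideal_gen)
lemma Lg_mono: "k \<le> l \<Longrightarrow> Lg k \<subseteq> Lg l"
  unfolding Lg_def by (rule ideal_gen_mono) auto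

lemma y_in_Lg: "Xv (2 * k + 1) \<in> Lg (Suc k)"
proof (induction k rule: less_induct)
  case (less k)
  have "Kl k \<subseteq> Lg (Suc k)"
    unfolding Kl_def
  proof (rule ideal_gen_least[OF Lg_ideal])
    show "Xv ` Ys k \<subseteq> Lg (Suc k)"
    proof
      fix z assume "z \<in> Xv ` Ys k"
      then obtain i where i: "i < k" "z = Xv (2 * i + 1)" by (auto simp: Ys_def)
      then show "z \<in> Lg (Suc k)" using less[OF i(1)] Lg_mono[of "Suc i" "Suc k"] by auto
    qed
  qed
  then have "Xv (2 * k + 1) - dk k yv \<in> Lg (Suc k)" using y_cong by blast
  moreover have "dk k yv \<in> Lg (Suc k)" unfolding Lg_def by (rule ideal_gen_in) auto
  ultimately show ?case using id_add[OF Lg_ideal] by fastforce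
qed

lemma Kl_Lg: "Kl k \<subseteq> Lg k"
  unfolding Kl_def
proof (rule ideal_gen_least[OF Lg_ideal])
  show "Xv ` Ys k \<subseteq> Lg k"
  proof
    fix z assume "z \<in> Xv ` Ys k"
    then obtain i where i: "i < k" "z = Xv (2 * i + 1)" by (auto simp: Ys_def)
    then show "z \<in> Lg k" using y_in_Lg[of i] Lg_mono[of "Suc i" k] by auto
  qed
qed

lemma F_add_x: "(F ^^ k) (xv + yv) - (F ^^ k) xv = (F ^^ k) yv"
  by (simp add: rhom_add[OF rhomFn])

lemma d_add: "dk k (xv + yv) - dk k xv \<in> Kl (Suc k)"
proof (induction k rule: less_induct)
  case (less k)
  have "of_nat (p ^ k) * (dk k (xv + yv) - dk k xv) = (F ^^ k) yv -
     (\<Sum>i<k. of_nat (p ^ i) * (dk i (xv + yv) ^ (p ^ (k - i)) - dk i xv ^ (p ^ (k - i))))"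
    by (simp add: right_diff_distrib ghost_split rhom_add[OF rhomFn] sum_subtractf algebra_simps)
  also have "\<dots> \<in> Kl (Suc k)"
  proof (rule id_diff[OF Kl_ideal])
    show "(F ^^ k) yv \<in> Kl (Suc k)" using Fy_in[of k 0] by simp
    show "(\<Sum>i<k. of_nat (p ^ i) * (dk i (xv + yv) ^ (p ^ (k - i)) - dk i xv ^ (p ^ (k - i)))) \<in> Kl (Suc k)"
    proof (rule id_sum[OF Kl_ideal])
      fix i assume "i \<in> {..<k}"
      then have "dk i (xv + yv) - dk i xv \<in> Kl (Suc k)" using less[of i] Kl_mono[of "Suc i" "Suc k"] by auto
      then show "of_nat (p ^ i) * (dk i (xv + yv) ^ (p ^ (k - i)) - dk i xv ^ (p ^ (k - i))) \<in> Kl (Suc k)"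
        using id_pow_diff[OF Kl_ideal] id_multL[OF Kl_ideal] by blast
    qed
  qed
  finally show ?case by (rule Kl_tf) (simp_all add: pp)
qed

lemma d_mult: "dk k (xv * yv) \<in> Kl (Suc k)"
proof (induction k rule: less_induct)
  case (less k)
  have "of_nat (p ^ k) * dk k (xv * yv) = (F ^^ k) xv * (F ^^ k) yv -
     (\<Sum>i<k. of_nat (p ^ i) * dk i (xv * yv) ^ (p ^ (k - i)))"
    by (simp add: ghost_split rhom_mult[OF rhomFn])
  also have "\<dots> \<in> Kl (Suc k)"
  proof (rule id_diff[OF Kl_ideal])
    show "(F ^^ k) xv * (F ^^ k) yv \<in> Kl (Suc k)" using Fy_in[of k 0] id_multL[OF Kl_ideal] by simp
    show "(\<Sum>i<k. of_nat (p ^ i) * dk i (xv * yv) ^ (p ^ (k - i))) \<in> Kl (Suc k)"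
    proof (rule id_sum[OF Kl_ideal])
      fix i assume "i \<in> {..<k}"
      then have "dk i (xv * yv) \<in> Kl (Suc k)" using less[of i] Kl_mono[of "Suc i" "Suc k"] by auto
      then show "of_nat (p ^ i) * dk i (xv * yv) ^ (p ^ (k - i)) \<in> Kl (Suc k)"
        using id_pow[OF Kl_ideal] id_multL[OF Kl_ideal] pp by simp
    qed
  qed
  finally show ?case by (rule Kl_tf) (simp_all add: pp)
qed

lemma d_mult2: "dk k (xv * yv) - (F ^^ k) xv * dk k yv \<in> Kl k"
proof -
  have "of_nat (p ^ k) * (dk k (xv * yv) - (F ^^ k) xv * dk k yv) =
     (F ^^ k) xv * (\<Sum>i<k. of_nat (p ^ i) * dk i yv ^ (p ^ (k - i))) -
     (\<Sum>i<k. of_nat (p ^ i) * dk i (xv * yv) ^ (p ^ (k - i)))"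
  proof -
    have "of_nat (p ^ k) * ((F ^^ k) xv * dk k yv) = (F ^^ k) xv * (of_nat (p ^ k) * dk k yv)"
      by (simp add: algebra_simps)
    then show ?thesis
      by (simp add: right_diff_distrib ghost_split rhom_mult[OF rhomFn] algebra_simps)
  qed
  also have "\<dots> \<in> Kl k"
  proof (rule id_diff[OF Kl_ideal])
    show "(F ^^ k) xv * (\<Sum>i<k. of_nat (p ^ i) * dk i yv ^ (p ^ (k - i))) \<in> Kl k"
      using sum_in_Kl id_multL[OF Kl_ideal] by blast
    show "(\<Sum>i<k. of_nat (p ^ i) * dk i (xv * yv) ^ (p ^ (k - i))) \<in> Kl k"
    proof (rule id_sum[OF Kl_ideal])
      fix i assume "i \<in> {..<k}"
      then have "dk i (xv * yv) \<in> Kl k" using d_mult[of i] Kl_mono[of "Suc i" k] by auto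
      then show "of_nat (p ^ i) * dk i (xv * yv) ^ (p ^ (k - i)) \<in> Kl k"
        using id_pow[OF Kl_ideal] id_multL[OF Kl_ideal] pp by simp
    qed
  qed
  finally show ?thesis by (rule Kl_tf) (simp_all add: pp)
qed

lemma D_F: "D (F z) = F (D z)"
proof -
  have "of_nat p * D (F z) = F (F z) - F z ^ p" using Dz_eq[OF pr] by simp
  also have "\<dots> = F (of_nat p * D z)"
    by (simp add: Dz_eq[OF pr] rhom_diff[OF rhomF] rhom_power[OF rhomF])
  also have "\<dots> = of_nat p * F (D z)" by (simp add: rhom_mult[OF rhomF] rhom_of_nat[OF rhomF])
  finally show ?thesis using pp by simp
qed

end



declare of_nat_power [simp del]

context dring begin

interpretation R: zp p by unfold_locales (rule prime_p)

definition vv :: "'a \<Rightarrow> 'a \<Rightarrow> nat \<Rightarrow> 'a" where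
  "vv x a j = (\<delta> ^^ (j div 2)) (if even j then x else a)"

lemma vv_delta: "\<delta> (vv x a j) = vv x a (s2 j)"
  by (simp add: vv_def s2_def)

definition ev2 :: "'a \<Rightarrow> 'a \<Rightarrow> zpoly \<Rightarrow> 'a" where
  "ev2 x a = mpoly_eval (vv x a)"

lemma rhom_ev2: "rhom (ev2 x a)" unfolding ev2_def by (rule rhom_mpoly_eval)

lemma ev2_D: "ev2 x a (R.D P) = \<delta> (ev2 x a P)"
  unfolding ev2_def by (rule eval_delta[symmetric]) (rule vv_delta)

lemma ev2_Dpow: "ev2 x a ((R.D ^^ i) P) = (\<delta> ^^ i) (ev2 x a P)"
  by (induction i) (simp_all add: ev2_D)

lemma ev2_F: "ev2 x a (R.F P) = \<phi> (ev2 x a P)"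
proof -
  have "R.F P = P ^ p + of_nat p * R.D P" using R.frobF by (metis frob_def)
  then show ?thesis
    by (simp add: rhom_add[OF rhom_ev2] rhom_mult[OF rhom_ev2] rhom_power[OF rhom_ev2]
        rhom_of_nat[OF rhom_ev2] ev2_D frob_def)
qed

lemma ev2_Fpow: "ev2 x a ((R.F ^^ i) P) = (\<phi> ^^ i) (ev2 x a P)"
  by (induction i) (simp_all add: ev2_F)

lemma ev2_dk: "ev2 x a (R.dk k z) = delta_k p \<delta> k (ev2 x a z)"
  unfolding delta_k_def
  by (simp add: rhom_mpoly_eval_comm[OF rhom_ev2] comp_def ev2_Dpow)

lemma ev2_x: "ev2 x a R.xv = x" by (simp add: ev2_def mpoly_eval_Xv vv_def)
lemma ev2_y: "ev2 x a R.yv = a" by (simp add: ev2_def mpoly_eval_Xv vv_def)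
lemma ev2_y': "ev2 x a (Xv (Suc 0)) = a" by (simp add: ev2_def mpoly_eval_Xv vv_def)
lemma ev2_yk: "ev2 x a (Xv (2 * k + 1)) = (\<delta> ^^ k) a" by (simp add: ev2_def mpoly_eval_Xv vv_def)

definition Wa :: "nat \<Rightarrow> 'a \<Rightarrow> 'a set" where
  "Wa k a = ideal_gen {delta_k p \<delta> i a | i. i < k}"

lemma Wa_ideal: "is_ideal (Wa k a)" by (simp add: Wa_def is_ideal_ideal_gen)
lemma Wa_mono: "k \<le> l \<Longrightarrow> Wa k a \<subseteq> Wa l a"
  unfolding Wa_def by (rule ideal_gen_mono) auto

lemma ev2_Lg: "ev2 x a ` R.Lg k \<subseteq> Wa k a"
proof -
  have "ev2 x a ` R.Lg k \<subseteq> ideal_gen (ev2 x a ` {R.dk i R.yv | i. i < k})"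
    unfolding R.Lg_def by (rule rhom_ideal_gen_image[OF rhom_ev2])
  also have "ev2 x a ` {R.dk i R.yv | i. i < k} = {delta_k p \<delta> i a | i. i < k}"
  proof
    show "ev2 x a ` {R.dk i R.yv | i. i < k} \<subseteq> {delta_k p \<delta> i a | i. i < k}"
      by (auto simp: ev2_dk ev2_y ev2_y')
    show "{delta_k p \<delta> i a | i. i < k} \<subseteq> ev2 x a ` {R.dk i R.yv | i. i < k}"
    proof
      fix z assume "z \<in> {delta_k p \<delta> i a | i. i < k}"
      then obtain i where i: "i < k" "z = delta_k p \<delta> i a" by blast
      then have "z = ev2 x a (R.dk i R.yv)" by (simp only: ev2_dk ev2_y)
      then show "z \<in> ev2 x a ` {R.dk i R.yv | i. i < k}" using i by blast
    qed
  qed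
  finally show ?thesis by (simp add: Wa_def)
qed

lemma ev2_Kl: "ev2 x a ` R.Kl k \<subseteq> Wa k a"
  using R.Kl_Lg ev2_Lg by blast

lemma iter_in_Wa: "(\<delta> ^^ k) a \<in> Wa (Suc k) a"
proof -
  have "ev2 a a (Xv (2 * k + 1)) \<in> ev2 a a ` R.Lg (Suc k)" using R.y_in_Lg[of k] by (rule imageI)
  then have "ev2 a a (Xv (2 * k + 1)) \<in> Wa (Suc k) a" using ev2_Lg[of a a "Suc k"] by blast
  then show ?thesis by (simp only: ev2_yk)
qed

lemma dk_add: "delta_k p \<delta> k (x + a) - delta_k p \<delta> k x \<in> Wa (Suc k) a"
proof -
  have "ev2 x a (R.dk k (R.xv + R.yv) - R.dk k R.xv) \<in> Wa (Suc k) a"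
    using R.d_add[of k] ev2_Kl by blast
  then show ?thesis by (simp add: rhom_diff[OF rhom_ev2] ev2_dk rhom_add[OF rhom_ev2] ev2_x ev2_y ev2_y')
qed

lemma dk_mult: "delta_k p \<delta> k (x * a) \<in> Wa (Suc k) a"
proof -
  have "ev2 x a (R.dk k (R.xv * R.yv)) \<in> Wa (Suc k) a"
    using R.d_mult[of k] ev2_Kl by blast
  then show ?thesis by (simp add: ev2_dk rhom_mult[OF rhom_ev2] ev2_x ev2_y ev2_y')
qed

lemma dk_mult2: "delta_k p \<delta> k (x * a) - (\<phi> ^^ k) x * delta_k p \<delta> k a \<in> Wa k a"
proof -
  have "ev2 x a (R.dk k (R.xv * R.yv) - (R.F ^^ k) R.xv * R.dk k R.yv) \<in> Wa k a"
    using R.d_mult2[of k] ev2_Kl by blast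
  then show ?thesis
    by (simp add: ev2_dk rhom_mult[OF rhom_ev2] rhom_diff[OF rhom_ev2] ev2_x ev2_y ev2_y' ev2_Fpow)
qed

lemma delta_frob: "\<delta> (\<phi> z) = \<phi> (\<delta> z)"
proof -
  have "ev2 z z (R.D (R.F R.xv)) = ev2 z z (R.F (R.D R.xv))" by (simp add: R.D_F)
  then show ?thesis by (simp add: ev2_D ev2_F ev2_x)
qed

lemma deltapow_frob: "(\<delta> ^^ i) (\<phi> z) = \<phi> ((\<delta> ^^ i) z)"
  by (induction i) (simp_all add: delta_frob)

lemma dk_frob: "delta_k p \<delta> k (\<phi> z) = \<phi> (delta_k p \<delta> k z)"
  unfolding delta_k_def
  by (simp add: rhom_mpoly_eval_comm[OF rhom_frob] comp_def deltapow_frob)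

end



declare of_nat_power [simp del]

lemma ideal_gen_ideal: "is_ideal J \<Longrightarrow> ideal_gen J = J"
  using ideal_gen_least ideal_gen_sub by blast

lemma ideal_gen_idem: "ideal_gen (ideal_gen S) = ideal_gen S"
  by (simp add: ideal_gen_ideal is_ideal_ideal_gen)

lemma ideal_gen_multL: "x \<in> S \<Longrightarrow> r * x \<in> ideal_gen S"
  by (intro id_multL[OF is_ideal_ideal_gen] ideal_gen_in)

lemma ideal_prod_gen:
  "ideal_prod (ideal_gen S) (ideal_gen T) = ideal_gen {s * t | s t. s \<in> S \<and> t \<in> T}"
proof
  let ?M = "ideal_gen {s * t | s t. s \<in> S \<and> t \<in> T}"
  have M: "is_ideal ?M" by (rule is_ideal_ideal_gen)
  have st: "x * y \<in> ?M" if x: "x \<in> ideal_gen S" and y: "y \<in> ideal_gen T" for x y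
  proof -
    have "ideal_gen S \<subseteq> {x. \<forall>t\<in>T. x * t \<in> ?M}"
    proof (rule ideal_gen_least)
      show "is_ideal {x. \<forall>t\<in>T. x * t \<in> ?M}"
        unfolding is_ideal_def by (auto simp: id_0[OF M] distrib_right id_add[OF M] mult.assoc id_multL[OF M])
      show "S \<subseteq> {x. \<forall>t\<in>T. x * t \<in> ?M}" by (auto intro: ideal_gen_in)
    qed
    then have xt: "\<forall>t\<in>T. x * t \<in> ?M" using x by blast
    have "ideal_gen T \<subseteq> {y. x * y \<in> ?M}"
    proof (rule ideal_gen_least)
      show "is_ideal {y. x * y \<in> ?M}"
        unfolding is_ideal_def by (auto simp: id_0[OF M] distrib_left id_add[OF M] mult.left_commute[of x] id_multL[OF M])
      show "T \<subseteq> {y. x * y \<in> ?M}" using xt by auto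
    qed
    then show ?thesis using y by blast
  qed
  show "ideal_prod (ideal_gen S) (ideal_gen T) \<subseteq> ?M"
    unfolding ideal_prod_def by (rule ideal_gen_least[OF M]) (use st in auto)
  show "?M \<subseteq> ideal_prod (ideal_gen S) (ideal_gen T)"
    unfolding ideal_prod_def by (rule ideal_gen_mono) (use ideal_gen_sub in blast)
qed

lemma ideal_gen_rhom_image: "rhom h \<Longrightarrow> ideal_gen (h ` ideal_gen S) = ideal_gen (h ` S)"
proof
  assume h: "rhom h"
  show "ideal_gen (h ` ideal_gen S) \<subseteq> ideal_gen (h ` S)"
    using ideal_gen_mono[OF rhom_ideal_gen_image[OF h, of S]] by (simp add: ideal_gen_idem)
  show "ideal_gen (h ` S) \<subseteq> ideal_gen (h ` ideal_gen S)"
    by (intro ideal_gen_mono image_mono ideal_gen_sub)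
qed

lemma coset_eq: "is_ideal J \<Longrightarrow> u - v \<in> J \<Longrightarrow> coset J u = coset J v"
proof -
  assume J: "is_ideal J" and d: "u - v \<in> J"
  have "coset J u \<subseteq> coset J v" if "u - v \<in> J" for u v
  proof
    fix z assume "z \<in> coset J u"
    then obtain j where "j \<in> J" "z = u + j" by (auto simp: coset_def)
    then have "z = v + ((u - v) + j)" "(u - v) + j \<in> J" using that id_add[OF J] by auto
    then show "z \<in> coset J v" unfolding coset_def by blast
  qed
  moreover have "v - u \<in> J" using id_uminus[OF J d] by simp
  ultimately show ?thesis using d by blast
qed

locale prs = dring p \<delta> for p and \<delta> :: "'a::comm_ring_1 \<Rightarrow> 'a" +
  fixes I :: "'a set"
  assumes I: "is_ideal I"
begin

definition Gen :: "nat \<Rightarrow> nat \<Rightarrow> 'a set" where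
  "Gen m N = {prod (\<lambda>i. (\<phi> ^^ i) (b i)) {m..N} | b. \<forall>i. b i \<in> I}"

definition G :: "nat \<Rightarrow> nat \<Rightarrow> 'a set" where
  "G m N = ideal_gen (Gen m N)"

lemma G_ideal: "is_ideal (G m N)" by (simp add: G_def is_ideal_ideal_gen)

lemma rhom_phin: "rhom (\<phi> ^^ n)" by (rule rhom_funpow[OF rhom_frob])

lemma phi_comp: "(\<phi> ^^ m) ((\<phi> ^^ i) y) = (\<phi> ^^ (i + m)) y"
  by (metis add.commute comp_apply funpow_add)

lemma Gen_00: "Gen 0 0 = I"
proof
  show "Gen 0 0 \<subseteq> I" by (auto simp: Gen_def)
  show "I \<subseteq> Gen 0 0"
  proof
    fix y assume "y \<in> I"
    then show "y \<in> Gen 0 0" unfolding Gen_def by (intro CollectI exI[of _ "\<lambda>_. y"]) auto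
  qed
qed

lemma Gen_Suc: "Gen 0 (Suc N) = {s * t | s t. s \<in> Gen 0 N \<and> t \<in> (\<phi> ^^ Suc N) ` I}"
proof
  show "Gen 0 (Suc N) \<subseteq> {s * t | s t. s \<in> Gen 0 N \<and> t \<in> (\<phi> ^^ Suc N) ` I}"
  proof
    fix z assume "z \<in> Gen 0 (Suc N)"
    then obtain b where b: "\<forall>i. b i \<in> I" "z = prod (\<lambda>i. (\<phi> ^^ i) (b i)) {0..Suc N}" by (auto simp: Gen_def)
    then have "z = prod (\<lambda>i. (\<phi> ^^ i) (b i)) {0..N} * (\<phi> ^^ Suc N) (b (Suc N))"
      by (simp add: prod.atLeast0_atMost_Suc)
    moreover have "prod (\<lambda>i. (\<phi> ^^ i) (b i)) {0..N} \<in> Gen 0 N" using b by (auto simp: Gen_def)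
    ultimately show "z \<in> {s * t | s t. s \<in> Gen 0 N \<and> t \<in> (\<phi> ^^ Suc N) ` I}" using b by blast
  qed
  show "{s * t | s t. s \<in> Gen 0 N \<and> t \<in> (\<phi> ^^ Suc N) ` I} \<subseteq> Gen 0 (Suc N)"
  proof
    fix z assume "z \<in> {s * t | s t. s \<in> Gen 0 N \<and> t \<in> (\<phi> ^^ Suc N) ` I}"
    then obtain b c where b: "\<forall>i. b i \<in> I" "c \<in> I"
      "z = prod (\<lambda>i. (\<phi> ^^ i) (b i)) {0..N} * (\<phi> ^^ Suc N) c" by (auto simp: Gen_def)
    define b' where "b' = b(Suc N := c)"
    have "prod (\<lambda>i. (\<phi> ^^ i) (b' i)) {0..N} = prod (\<lambda>i. (\<phi> ^^ i) (b i)) {0..N}"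
      by (rule prod.cong) (auto simp: b'_def)
    then have "z = prod (\<lambda>i. (\<phi> ^^ i) (b' i)) {0..Suc N}"
      using b by (simp add: prod.atLeast0_atMost_Suc b'_def)
    moreover have "\<forall>i. b' i \<in> I" using b by (simp add: b'_def)
    ultimately show "z \<in> Gen 0 (Suc N)" by (auto simp: Gen_def)
  qed
qed

lemma Iseq_G: "Iseq p \<delta> I N = G 0 N"
proof (induction N)
  case 0 then show ?case by (simp add: G_def Gen_00 ideal_gen_ideal[OF I])
next
  case (Suc N)
  have "Iseq p \<delta> I (Suc N) = ideal_prod (ideal_gen (Gen 0 N)) (ideal_gen ((\<phi> ^^ Suc N) ` I))"
    using Suc by (simp add: G_def)
  also have "\<dots> = G 0 (Suc N)" by (simp add: ideal_prod_gen Gen_Suc G_def)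
  finally show ?case .
qed

lemma phi_Gen: "(\<phi> ^^ m) ` Gen 0 n = Gen m (m + n)"
proof
  show "(\<phi> ^^ m) ` Gen 0 n \<subseteq> Gen m (m + n)"
  proof
    fix z assume "z \<in> (\<phi> ^^ m) ` Gen 0 n"
    then obtain b where b: "\<forall>i. b i \<in> I" "z = (\<phi> ^^ m) (prod (\<lambda>i. (\<phi> ^^ i) (b i)) {0..n})"
      by (auto simp: Gen_def)
    have "z = prod (\<lambda>i. (\<phi> ^^ (i + m)) (b i)) {0..n}"
      using b by (simp add: rhom_prod[OF rhom_phin] phi_comp)
    also have "\<dots> = prod (\<lambda>j. (\<phi> ^^ j) (b (j - m))) {0 + m..n + m}"
      by (simp only: prod.shift_bounds_cl_nat_ivl) simp
    finally have "z = prod (\<lambda>j. (\<phi> ^^ j) (b (j - m))) {m..m + n}" by (simp add: add.commute)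
    then show "z \<in> Gen m (m + n)" using b by (auto simp: Gen_def)
  qed
  show "Gen m (m + n) \<subseteq> (\<phi> ^^ m) ` Gen 0 n"
  proof
    fix z assume "z \<in> Gen m (m + n)"
    then obtain b where b: "\<forall>i. b i \<in> I" "z = prod (\<lambda>i. (\<phi> ^^ i) (b i)) {m..m + n}"
      by (auto simp: Gen_def)
    have "z = prod (\<lambda>i. (\<phi> ^^ i) (b i)) {0 + m..n + m}" using b by (simp add: add.commute)
    also have "\<dots> = prod (\<lambda>i. (\<phi> ^^ (i + m)) (b (i + m))) {0..n}"
      by (simp only: prod.shift_bounds_cl_nat_ivl)
    also have "\<dots> = (\<phi> ^^ m) (prod (\<lambda>i. (\<phi> ^^ i) (b (i + m))) {0..n})"
      by (simp add: rhom_prod[OF rhom_phin] phi_comp)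
    finally have eq: "z = (\<phi> ^^ m) (prod (\<lambda>i. (\<phi> ^^ i) (b (i + m))) {0..n})" .
    have "prod (\<lambda>i. (\<phi> ^^ i) (b (i + m))) {0..n} \<in> Gen 0 n"
      unfolding Gen_def using b by (intro CollectI exI[of _ "\<lambda>i. b (i + m)"]) auto
    then show "z \<in> (\<phi> ^^ m) ` Gen 0 n" using eq by blast
  qed
qed

lemma J_G: "ideal_gen ((\<phi> ^^ m) ` Iseq p \<delta> I n) = G m (m + n)"
  by (simp add: Iseq_G G_def ideal_gen_rhom_image[OF rhom_phin] phi_Gen)

lemma phi_Gen1: "\<phi> ` Gen i M \<subseteq> Gen (Suc i) (Suc M)"
proof
  fix z assume "z \<in> \<phi> ` Gen i M"
  then obtain b where b: "\<forall>i. b i \<in> I" "z = \<phi> (prod (\<lambda>j. (\<phi> ^^ j) (b j)) {i..M})"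
    by (auto simp: Gen_def)
  have "z = prod (\<lambda>j. (\<phi> ^^ Suc j) (b j)) {i..M}"
    using b by (simp add: rhom_prod[OF rhom_frob])
  also have "\<dots> = prod (\<lambda>j. (\<phi> ^^ j) (b (j - 1))) {Suc i..Suc M}"
    by (simp only: prod.shift_bounds_cl_Suc_ivl) simp
  finally have eq: "z = prod (\<lambda>j. (\<phi> ^^ j) (b (j - 1))) {Suc i..Suc M}" .
  show "z \<in> Gen (Suc i) (Suc M)" unfolding Gen_def
    by (rule CollectI, rule exI[of _ "\<lambda>j. b (j - 1)"]) (use eq b in blast)
qed

lemma phi_G1: "\<phi> ` G i M \<subseteq> G (Suc i) (Suc M)"
proof -
  have "\<phi> ` G i M \<subseteq> ideal_gen (\<phi> ` Gen i M)"
    unfolding G_def by (rule rhom_ideal_gen_image[OF rhom_frob])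
  also have "\<dots> \<subseteq> G (Suc i) (Suc M)" unfolding G_def by (rule ideal_gen_mono[OF phi_Gen1])
  finally show ?thesis .
qed

lemma one_Gen: "N < m \<Longrightarrow> 1 \<in> Gen m N"
  unfolding Gen_def using I id_0 by (intro CollectI exI[of _ "\<lambda>_. 0"]) auto

lemma G_Suc_mono: "G k N \<subseteq> G (Suc k) N"
proof (cases "k \<le> N")
  case True
  show ?thesis unfolding G_def
  proof (rule ideal_gen_least[OF is_ideal_ideal_gen])
    show "Gen k N \<subseteq> ideal_gen (Gen (Suc k) N)"
    proof
      fix z assume "z \<in> Gen k N"
      then obtain b where b: "\<forall>i. b i \<in> I" "z = prod (\<lambda>i. (\<phi> ^^ i) (b i)) {k..N}"
        by (auto simp: Gen_def)
      then have "z = (\<phi> ^^ k) (b k) * prod (\<lambda>i. (\<phi> ^^ i) (b i)) {Suc k..N}"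
        using True by (simp add: prod.atLeast_Suc_atMost)
      moreover have "prod (\<lambda>i. (\<phi> ^^ i) (b i)) {Suc k..N} \<in> Gen (Suc k) N" using b by (auto simp: Gen_def)
      ultimately show "z \<in> ideal_gen (Gen (Suc k) N)" by (simp add: ideal_gen_multL)
    qed
  qed
next
  case False
  then have "1 \<in> G (Suc k) N" using one_Gen[of N "Suc k"] by (simp add: G_def ideal_gen_in)
  then have "x \<in> G (Suc k) N" for x using id_multL[OF G_ideal \<open>1 \<in> G (Suc k) N\<close>, of x] by simp
  then have "G (Suc k) N = UNIV" by auto
  then show ?thesis by simp
qed

lemma G_mono: "k \<le> l \<Longrightarrow> G k N \<subseteq> G l N"
proof (induction l)
  case 0 then show ?case by simp
next
  case (Suc l) then show ?case using G_Suc_mono[of l N] by (cases "k = Suc l") auto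
qed

lemma G_mult: "y \<in> I \<Longrightarrow> k \<le> N \<Longrightarrow> u \<in> G (Suc k) N \<Longrightarrow> (\<phi> ^^ k) y * u \<in> G k N"
proof -
  assume y: "y \<in> I" and k: "k \<le> N" and u: "u \<in> G (Suc k) N"
  have "G (Suc k) N \<subseteq> {u. (\<phi> ^^ k) y * u \<in> G k N}"
    unfolding G_def
  proof (rule ideal_gen_least)
    show "is_ideal {u. (\<phi> ^^ k) y * u \<in> ideal_gen (Gen k N)}"
      using G_ideal[of k N] unfolding G_def is_ideal_def
      by (auto simp: distrib_left mult.left_commute[of "(\<phi> ^^ k) y"])
    show "Gen (Suc k) N \<subseteq> {u. (\<phi> ^^ k) y * u \<in> ideal_gen (Gen k N)}"
    proof
      fix z assume "z \<in> Gen (Suc k) N"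
      then obtain b where b: "\<forall>i. b i \<in> I" "z = prod (\<lambda>i. (\<phi> ^^ i) (b i)) {Suc k..N}"
        by (auto simp: Gen_def)
      define b' where "b' = b(k := y)"
      have "prod (\<lambda>i. (\<phi> ^^ i) (b' i)) {Suc k..N} = z"
        using b by (auto simp: b'_def intro: prod.cong)
      then have "(\<phi> ^^ k) y * z = prod (\<lambda>i. (\<phi> ^^ i) (b' i)) {k..N}"
        using k by (simp add: prod.atLeast_Suc_atMost b'_def)
      moreover have "\<forall>i. b' i \<in> I" using b y by (simp add: b'_def)
      ultimately show "z \<in> {u. (\<phi> ^^ k) y * u \<in> ideal_gen (Gen k N)}"
        by (auto simp: Gen_def intro!: ideal_gen_in)
    qed
  qed
  then show ?thesis using u by blast
qed

abbreviation "dd k z \<equiv> delta_k p \<delta> k z"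

lemma dk_zero: "dd k 0 = 0"
proof (induction k rule: less_induct)
  case (less k)
  have "dd k (0 * 0) - (\<phi> ^^ k) 0 * dd k 0 \<in> Wa k 0" by (rule dk_mult2)
  moreover have "Wa k 0 \<subseteq> {0}"
    unfolding Wa_def
    by (rule ideal_gen_least) (use less in \<open>auto simp: is_ideal_def\<close>)
  ultimately show ?case by (auto simp: rhom_zero[OF rhom_phin])
qed

lemma Wa_sub: "(\<And>i. i < k \<Longrightarrow> dd i a \<in> J) \<Longrightarrow> is_ideal J \<Longrightarrow> Wa k a \<subseteq> J"
  unfolding Wa_def by (rule ideal_gen_least) auto

definition T :: "nat \<Rightarrow> 'a set" where
  "T N = {z. \<forall>k\<le>N. dd k z \<in> G k N}"

lemma T_ideal: "is_ideal (T N)"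
proof -
  have Wsub: "Wa (Suc k) z \<subseteq> G k N" if "z \<in> T N" "k \<le> N" for z k
  proof (rule Wa_sub[OF _ G_ideal])
    fix i assume "i < Suc k"
    then show "dd i z \<in> G k N" using that G_mono[of i k N] by (auto simp: T_def)
  qed
  show ?thesis unfolding is_ideal_def
  proof (intro conjI ballI allI)
    show "0 \<in> T N" by (simp add: T_def dk_zero id_0[OF G_ideal])
  next
    fix x y assume x: "x \<in> T N" and y: "y \<in> T N"
    show "x + y \<in> T N" unfolding T_def
    proof (intro CollectI allI impI)
      fix k assume k: "k \<le> N"
      have "dd k (x + y) - dd k x \<in> G k N" using dk_add[of k x y] Wsub[OF y k] by blast
      moreover have "dd k x \<in> G k N" using x k by (simp add: T_def)
      ultimately have "(dd k (x + y) - dd k x) + dd k x \<in> G k N" by (rule id_add[OF G_ideal])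
      then show "dd k (x + y) \<in> G k N" by simp
    qed
  next
    fix a x assume x: "x \<in> T N"
    show "a * x \<in> T N" unfolding T_def using dk_mult[of _ a x] Wsub[OF x] by blast
  qed
qed

lemma main: "z \<in> G 0 N \<Longrightarrow> k \<le> N \<Longrightarrow> dd k z \<in> G k N"
proof -
  have "Gen 0 N \<subseteq> T N"
  proof (induction N)
    case 0
    show ?case
    proof
      fix z assume z: "z \<in> Gen 0 0"
      then show "z \<in> T 0" by (auto simp: T_def delta0 G_def ideal_gen_in)
    qed
  next
    case (Suc M)
    show ?case
    proof
      fix z assume "z \<in> Gen 0 (Suc M)"
      then obtain b where b: "\<forall>i. b i \<in> I" "z = prod (\<lambda>i. (\<phi> ^^ i) (b i)) {0..Suc M}"
        by (auto simp: Gen_def)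
      define w where "w = prod (\<lambda>i. (\<phi> ^^ i) (b (Suc i))) {0..M}"
      have wG: "w \<in> Gen 0 M" using b unfolding w_def Gen_def by auto
      then have wT: "w \<in> T M" using Suc by blast
      have "z = b 0 * prod (\<lambda>i. (\<phi> ^^ Suc i) (b (Suc i))) {0..M}"
        unfolding b(2) prod.atLeast0_atMost_Suc_shift by (simp add: comp_def)
      also have "prod (\<lambda>i. (\<phi> ^^ Suc i) (b (Suc i))) {0..M} = \<phi> w"
        by (simp add: w_def rhom_prod[OF rhom_frob])
      finally have z: "z = b 0 * \<phi> w" .
      have dw: "dd i (\<phi> w) \<in> G (Suc i) (Suc M)" if "i \<le> M" for i
      proof -
        have "dd i w \<in> G i M" using wT that by (simp add: T_def)
        then have "\<phi> (dd i w) \<in> G (Suc i) (Suc M)" using phi_G1 by blast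
        then show ?thesis by (simp add: dk_frob)
      qed
      show "z \<in> T (Suc M)" unfolding T_def
      proof (intro CollectI allI impI)
        fix k assume k: "k \<le> Suc M"
        have "Wa k (\<phi> w) \<subseteq> G k (Suc M)"
        proof (rule Wa_sub[OF _ G_ideal])
          fix i assume "i < k"
          then show "dd i (\<phi> w) \<in> G k (Suc M)" using dw[of i] k G_mono[of "Suc i" k "Suc M"] by auto
        qed
        then have A: "dd k (b 0 * \<phi> w) - (\<phi> ^^ k) (b 0) * dd k (\<phi> w) \<in> G k (Suc M)"
          using dk_mult2[of k "b 0" "\<phi> w"] by blast
        have B: "(\<phi> ^^ k) (b 0) * dd k (\<phi> w) \<in> G k (Suc M)"
        proof (cases "k \<le> M")
          case True
          then show ?thesis using G_mult[OF _ k dw[OF True]] b by simp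
        next
          case False
          then have "k = Suc M" using k by simp
          then have "1 \<in> G (Suc k) (Suc M)" using one_Gen[of "Suc M" "Suc k"] by (simp add: G_def ideal_gen_in)
          then have "dd k (\<phi> w) * 1 \<in> G (Suc k) (Suc M)" by (rule id_multL[OF G_ideal])
          then show ?thesis using G_mult[OF _ k] b by simp
        qed
        have "(dd k (b 0 * \<phi> w) - (\<phi> ^^ k) (b 0) * dd k (\<phi> w)) + (\<phi> ^^ k) (b 0) * dd k (\<phi> w) \<in> G k (Suc M)"
          by (rule id_add[OF G_ideal A B])
        then show "dd k z \<in> G k (Suc M)" by (simp add: z)
      qed
    qed
  qed
  then have "G 0 N \<subseteq> T N" unfolding G_def by (rule ideal_gen_least[OF T_ideal])
  then show "z \<in> G 0 N \<Longrightarrow> k \<le> N \<Longrightarrow> dd k z \<in> G k N" by (auto simp: T_def)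
qed

end



theorem lemma4p10:
  fixes p :: nat and \<delta> :: "'a::comm_ring_1 \<Rightarrow> 'a" and I :: "'a set" and m n :: nat
  assumes "prism p \<delta> I"
  shows "\<exists>g :: 'a set \<Rightarrow> 'a set list. \<forall>x.
           g (coset (Iseq p \<delta> I (m + n)) x) =
           map (\<lambda>k. coset (ideal_gen ((frob p \<delta> ^^ m) ` Iseq p \<delta> I n)) (delta_k p \<delta> k x)) [0..<Suc m]"
proof -
  have dr: "delta_ring p \<delta>" and Iid: "is_ideal I"
    using assms by (auto simp: prism_def cartier_ideal_def)
  interpret prs p \<delta> I by unfold_locales (rule dr, rule Iid)
  define J0 where "J0 = Iseq p \<delta> I (m + n)"
  define J where "J = ideal_gen ((frob p \<delta> ^^ m) ` Iseq p \<delta> I n)"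
  have J0G: "J0 = G 0 (m + n)" by (simp add: J0_def Iseq_G)
  have JG: "J = G m (m + n)" by (simp add: J_def J_G)
  have key: "coset J (dd k x) = coset J (dd k y)" if c: "coset J0 x = coset J0 y" and k: "k \<le> m" for x y k
  proof -
    have "x \<in> coset J0 x" unfolding coset_def J0G using id_0[OF G_ideal] by force
    then have "x \<in> coset J0 y" using c by simp
    then obtain j where j: "j \<in> J0" "x = y + j" unfolding coset_def by blast
    have "Wa (Suc k) j \<subseteq> G k (m + n)"
    proof (rule Wa_sub[OF _ G_ideal])
      fix i assume i: "i < Suc k"
      then have "dd i j \<in> G i (m + n)" using main[of j "m + n" i] j J0G k by simp
      then show "dd i j \<in> G k (m + n)" using G_mono[of i k "m + n"] i by auto
    qed
    moreover have "G k (m + n) \<subseteq> J" using G_mono[of k m "m + n"] k JG by simp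
    ultimately have "dd k (y + j) - dd k y \<in> J" using dk_add[of k y j] by blast
    then show ?thesis using coset_eq[of J] JG G_ideal j(2) by simp
  qed
  define g where "g C = map (\<lambda>k. coset J (dd k (SOME x. C = coset J0 x))) [0..<Suc m]" for C
  have "g (coset J0 x) = map (\<lambda>k. coset J (dd k x)) [0..<Suc m]" for x
  proof -
    have s: "coset J0 x = coset J0 (SOME x'. coset J0 x = coset J0 x')" by (rule someI[of _ x]) simp
    show ?thesis unfolding g_def
    proof (rule map_cong[OF refl])
      fix k assume "k \<in> set [0..<Suc m]"
      then have "k \<le> m" by auto
      then show "coset J (dd k (SOME x'. coset J0 x = coset J0 x')) = coset J (dd k x)"
        using key[OF s[symmetric]] by blast
    qed
  qed
  then show ?thesis unfolding J0_def J_def by blast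
qed


end
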